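(* Let $(K_n)_{n\in\omega}$ be an enumeration of the finitely presented groups (one representative of each isomorphism class), and let $G=\prod_{n\in\omega}K_n$ be their restricted direct product (the subgroup of the full direct product consisting of the elements with only finitely many nontrivial coordinates). Let $L$ be a two-generated simple group such that every homomorphism $L\to G$ is trivial, and let $H=L\times G$. Then $R_G L = L$ and $R_H L = 1$. In particular, $G$ and $H$ are not geometrically equivalent, while $G$ and $H$ satisfy the same quasiidentities.
   Context: For groups $G$ and $X$, the $G$-radical of $X$ is $R_G X=\bigcap\{\ker\varphi : \varphi: X\to G \text{ a homomorphism}\}$. For a normal subgroup $U$ of $X$, the $G$-closure $\overline{U}^G$ of $U$ in $X$ is the normal subgroup of $X$ containing $U$ with $\overline{U}^G/U = R_G(X/U)$; equivalently $\overline{U}^G=\bigcap\{\ker\varphi:\varphi:X\to G,\ U\subseteq\ker\varphi\}$. Two groups $G$ and $H$ are geometrically equivalent if for every free group $F$ of finite rank and every normal subgroup $U$ of $F$, the $G$-closure and the $H$-closure of $U$ in $F$ coincide. A quasiidentity is a formula $(w_1=1\wedge\dots\wedge w_n=1)\rightarrow w=1$ where $w_1,\dots,w_n,w$ are words in a free group of finite rank; a group satisfies it if it holds under every assignment of group elements to the variables. Two groups satisfy the same quasiidentities if every quasiidentity satisfied by one is satisfied by the other. *)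

theory Defs
  imports "HOL-Algebra.Algebra"
begin

text \<open>A letter (b, i) stands for the generator x_i if b = False and for its inverse if b = True.\<close>
type_synonym fword = "(bool \<times> nat) list"

fun inv_letter :: "bool \<times> nat \<Rightarrow> bool \<times> nat" where
  "inv_letter (b, i) = (\<not> b, i)"

fun fw_reduce :: "fword \<Rightarrow> fword" where
  "fw_reduce [] = []"
| "fw_reduce (x # xs) =
     (case fw_reduce xs of
        [] \<Rightarrow> [x]
      | y # ys \<Rightarrow> (if y = inv_letter x then ys else x # y # ys))"

definition free_group :: "nat \<Rightarrow> fword monoid" where
  "free_group k =
     \<lparr>carrier = {w. fw_reduce w = w \<and> (\<forall>l \<in> set w. snd l < k)},
      monoid.mult = (\<lambda>u v. fw_reduce (u @ v)),
      one = []\<rparr>"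

definition normal_closure :: "('a, 'm) monoid_scheme \<Rightarrow> 'a set \<Rightarrow> 'a set" where
  "normal_closure F R = \<Inter> {N. normal N F \<and> R \<subseteq> N}"

definition presented_group :: "nat \<Rightarrow> fword set \<Rightarrow> fword set monoid" where
  "presented_group k R = free_group k Mod normal_closure (free_group k) R"

definition finitely_presented :: "('a, 'm) monoid_scheme \<Rightarrow> bool" where
  "finitely_presented Y \<longleftrightarrow> group Y \<and>
     (\<exists>k R. finite R \<and> R \<subseteq> carrier (free_group k) \<and> is_iso Y (presented_group k R))"

text \<open>Not the library's simple_group, which presupposes finiteness (order G > 1).\<close>
definition simple :: "('a, 'm) monoid_scheme \<Rightarrow> bool" where
  "simple Y \<longleftrightarrow> group Y \<and> carrier Y \<noteq> {\<one>\<^bsub>Y\<^esub>} \<and>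
     (\<forall>N. normal N Y \<longrightarrow> N = carrier Y \<or> N = {\<one>\<^bsub>Y\<^esub>})"

definition two_generated :: "('a, 'm) monoid_scheme \<Rightarrow> bool" where
  "two_generated Y \<longleftrightarrow> (\<exists>a \<in> carrier Y. \<exists>b \<in> carrier Y. generate Y {a, b} = carrier Y)"

definition radical :: "('g, 'n) monoid_scheme \<Rightarrow> ('x, 'm) monoid_scheme \<Rightarrow> 'x set" where
  "radical G Y = \<Inter> {kernel Y G \<phi> | \<phi>. \<phi> \<in> hom Y G}"

definition gclosure :: "('g, 'n) monoid_scheme \<Rightarrow> ('x, 'm) monoid_scheme \<Rightarrow> 'x set \<Rightarrow> 'x set" where
  "gclosure G Y U = \<Inter> {kernel Y G \<phi> | \<phi>. \<phi> \<in> hom Y G \<and> U \<subseteq> kernel Y G \<phi>}"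

definition geom_equiv :: "('g, 'n) monoid_scheme \<Rightarrow> ('h, 'm) monoid_scheme \<Rightarrow> bool" where
  "geom_equiv G H \<longleftrightarrow>
     (\<forall>k U. normal U (free_group k) \<longrightarrow> gclosure G (free_group k) U = gclosure H (free_group k) U)"

definition word_eval :: "('x, 'm) monoid_scheme \<Rightarrow> (nat \<Rightarrow> 'x) \<Rightarrow> fword \<Rightarrow> 'x" where
  "word_eval Y a w =
     foldr (\<lambda>(b, i) r. (if b then inv\<^bsub>Y\<^esub> (a i) else a i) \<otimes>\<^bsub>Y\<^esub> r) w \<one>\<^bsub>Y\<^esub>"

definition satisfies_qi :: "('x, 'm) monoid_scheme \<Rightarrow> nat \<Rightarrow> fword list \<Rightarrow> fword \<Rightarrow> bool" where
  "satisfies_qi Y k ws w \<longleftrightarrow>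
     (\<forall>a. (\<forall>i < k. a i \<in> carrier Y) \<longrightarrow>
          (\<forall>v \<in> set ws. word_eval Y a v = \<one>\<^bsub>Y\<^esub>) \<longrightarrow> word_eval Y a w = \<one>\<^bsub>Y\<^esub>)"

definition same_quasiidentities :: "('g, 'n) monoid_scheme \<Rightarrow> ('h, 'm) monoid_scheme \<Rightarrow> bool" where
  "same_quasiidentities G H \<longleftrightarrow>
     (\<forall>k ws w. set ws \<subseteq> carrier (free_group k) \<longrightarrow> w \<in> carrier (free_group k) \<longrightarrow>
        (satisfies_qi G k ws w \<longleftrightarrow> satisfies_qi H k ws w))"

end

theory Submission
  imports Defs
begin


fun red :: "fword \<Rightarrow> bool" where
  "red [] = True"
| "red [x] = True"
| "red (x # y # ys) = (y \<noteq> inv_letter x \<and> red (y # ys))"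

definition cr :: "bool \<times> nat \<Rightarrow> fword \<Rightarrow> fword" where
  "cr x w = (case w of [] \<Rightarrow> [x] | y # ys \<Rightarrow> (if y = inv_letter x then ys else x # y # ys))"

lemma fw_cons: "fw_reduce (x # xs) = cr x (fw_reduce xs)"
  by (simp add: cr_def)

declare fw_reduce.simps(2)[simp del]

lemma inv_inv [simp]: "inv_letter (inv_letter x) = x"
  by (cases x) auto

lemma inv_neq [simp]: "inv_letter x \<noteq> x"
  by (cases x) auto

lemma red_tl: "red (x # xs) \<Longrightarrow> red xs"
  by (cases xs) auto

lemma red_cr: "red w \<Longrightarrow> red (cr x w)"
  by (cases w) (auto simp: cr_def dest: red_tl)

lemma red_fw: "red (fw_reduce w)"
  by (induction w) (auto simp: fw_cons red_cr)

lemma fw_red: "red w \<Longrightarrow> fw_reduce w = w"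
  by (induction w rule: red.induct) (auto simp: fw_cons cr_def)

lemma fw_idem [simp]: "fw_reduce (fw_reduce w) = fw_reduce w"
  by (simp add: fw_red red_fw)

lemma fw_eq_iff: "fw_reduce w = w \<longleftrightarrow> red w"
  by (metis fw_red red_fw)

lemma set_cr: "set (cr x w) \<subseteq> insert x (set w)"
  by (cases w) (auto simp: cr_def)

lemma set_fw: "set (fw_reduce w) \<subseteq> set w"
  apply (induction w)
   apply (simp)
  using set_cr by (fastforce simp: fw_cons)

lemma fw_append: "fw_reduce (u @ v) = foldr cr u (fw_reduce v)"
  by (induction u) (auto simp: fw_cons)

lemma cr_cancel: "red t \<Longrightarrow> cr x (cr (inv_letter x) t) = t"
proof (cases t)
  case Nil then show ?thesis by (simp add: cr_def)
next
  case (Cons y ys)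
  assume r: "red t"
  show ?thesis
  proof (cases "y = x")
    case True
    then show ?thesis using r Cons by (cases ys) (auto simp: cr_def)
  next
    case False
    then show ?thesis using Cons by (auto simp: cr_def)
  qed
qed

lemma cr_cancel': "red t \<Longrightarrow> cr (inv_letter x) (cr x t) = t"
  using cr_cancel[of t "inv_letter x"] by simp

lemma red_foldr: "red z \<Longrightarrow> red (foldr cr s z)"
  by (induction s) (auto simp: red_cr)

lemma foldr_cr_cr:
  assumes "red s" "red z"
  shows "foldr cr (cr x s) z = cr x (foldr cr s z)"
proof (cases s)
  case Nil then show ?thesis by (simp add: cr_def)
next
  case (Cons y ys)
  show ?thesis
  proof (cases "y = inv_letter x")
    case True
    have "red (foldr cr ys z)" using assms red_foldr by blast
    then show ?thesis using True Cons cr_cancel[of "foldr cr ys z" x]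
      by (simp add: cr_def)
  next
    case False
    then show ?thesis using Cons by (simp add: cr_def)
  qed
qed

lemma foldr_fw: "red z \<Longrightarrow> foldr cr (fw_reduce u) z = foldr cr u z"
  by (induction u) (auto simp: fw_cons foldr_cr_cr red_fw)

lemma fw_assoc: "fw_reduce (fw_reduce (u @ v) @ w) = fw_reduce (u @ fw_reduce (v @ w))"
proof -
  have "fw_reduce (fw_reduce (u @ v) @ w) = foldr cr (fw_reduce (u @ v)) (fw_reduce w)"
    by (rule fw_append)
  also have "\<dots> = foldr cr (u @ v) (fw_reduce w)" by (simp add: foldr_fw red_fw)
  also have "\<dots> = foldr cr u (fw_reduce (v @ w))" by (simp add: fw_append)
  also have "\<dots> = fw_reduce (u @ fw_reduce (v @ w))" by (metis fw_append fw_idem)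
  finally show ?thesis .
qed

lemma fw_inv: "fw_reduce (rev (map inv_letter x) @ x) = []"
proof (induction x)
  case Nil then show ?case by simp
next
  case (Cons a x)
  have "fw_reduce (rev (map inv_letter (a # x)) @ a # x)
      = foldr cr (rev (map inv_letter x)) (fw_reduce (inv_letter a # a # x))"
    by (simp add: fw_append)
  also have "fw_reduce (inv_letter a # a # x) = fw_reduce x"
    by (simp add: fw_cons cr_cancel' red_fw)
  also have "foldr cr (rev (map inv_letter x)) (fw_reduce x) = []"
    using Cons by (simp add: fw_append)
  finally show ?case .
qed

lemma carrier_free_group: "carrier (free_group k) = {w. fw_reduce w = w \<and> (\<forall>l \<in> set w. snd l < k)}"
  by (simp add: free_group_def)

lemma mult_free_group [simp]: "u \<otimes>\<^bsub>free_group k\<^esub> v = fw_reduce (u @ v)"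
  by (simp add: free_group_def)

lemma one_free_group [simp]: "\<one>\<^bsub>free_group k\<^esub> = []"
  by (simp add: free_group_def)

lemma fw_closed: "\<forall>l \<in> set w. snd l < k \<Longrightarrow> fw_reduce w \<in> carrier (free_group k)"
  using set_fw[of w] by (auto simp: carrier_free_group)

lemma group_free_group: "group (free_group k)"
proof (rule groupI)
  fix x y assume "x \<in> carrier (free_group k)" "y \<in> carrier (free_group k)"
  then show "x \<otimes>\<^bsub>free_group k\<^esub> y \<in> carrier (free_group k)"
    by simp (rule fw_closed, auto simp: carrier_free_group)
next
  show "\<one>\<^bsub>free_group k\<^esub> \<in> carrier (free_group k)" by (simp add: carrier_free_group)
next
  fix x y z assume "x \<in> carrier (free_group k)" "y \<in> carrier (free_group k)" "z \<in> carrier (free_group k)"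
  then show "x \<otimes>\<^bsub>free_group k\<^esub> y \<otimes>\<^bsub>free_group k\<^esub> z =
           x \<otimes>\<^bsub>free_group k\<^esub> (y \<otimes>\<^bsub>free_group k\<^esub> z)"
    by (simp add: fw_assoc)
next
  fix x assume "x \<in> carrier (free_group k)"
  then show "\<one>\<^bsub>free_group k\<^esub> \<otimes>\<^bsub>free_group k\<^esub> x = x"
    by (simp add: carrier_free_group)
next
  fix x assume x: "x \<in> carrier (free_group k)"
  let ?y = "fw_reduce (rev (map inv_letter x))"
  have "?y \<in> carrier (free_group k)"
    using x by (intro fw_closed) (auto simp: carrier_free_group)
  moreover have "?y \<otimes>\<^bsub>free_group k\<^esub> x = \<one>\<^bsub>free_group k\<^esub>"
    using fw_inv[of x] by (simp add: fw_append foldr_fw red_fw)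
  ultimately show "\<exists>y\<in>carrier (free_group k). y \<otimes>\<^bsub>free_group k\<^esub> x = \<one>\<^bsub>free_group k\<^esub>"
    by blast
qed

definition lt :: "('x, 'm) monoid_scheme \<Rightarrow> (nat \<Rightarrow> 'x) \<Rightarrow> bool \<times> nat \<Rightarrow> 'x" where
  "lt Y a l = (if fst l then inv\<^bsub>Y\<^esub> (a (snd l)) else a (snd l))"

lemma we_Nil [simp]: "word_eval Y a [] = \<one>\<^bsub>Y\<^esub>"
  by (simp add: word_eval_def)

lemma we_Cons: "word_eval Y a (x # xs) = lt Y a x \<otimes>\<^bsub>Y\<^esub> word_eval Y a xs"
  by (cases x) (simp add: word_eval_def lt_def)

lemma lt_closed: "group Y \<Longrightarrow> a (snd x) \<in> carrier Y \<Longrightarrow> lt Y a x \<in> carrier Y"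
  by (simp add: lt_def group.inv_closed)

lemma we_closed: "group Y \<Longrightarrow> \<forall>l \<in> set w. a (snd l) \<in> carrier Y \<Longrightarrow> word_eval Y a w \<in> carrier Y"
  by (induction w) (auto simp: we_Cons lt_closed group.is_monoid monoid.m_closed monoid.one_closed)

lemma we_append:
  assumes "group Y" "\<forall>l \<in> set (u @ v). a (snd l) \<in> carrier Y"
  shows "word_eval Y a (u @ v) = word_eval Y a u \<otimes>\<^bsub>Y\<^esub> word_eval Y a v"
  using assms
proof (induction u)
  case Nil then show ?case by (simp add: we_closed group.is_monoid monoid.l_one)
next
  case (Cons x u)
  then show ?case
    by (simp add: we_Cons monoid.m_assoc group.is_monoid lt_closed we_closed)
qed

lemma lt_inv: "group Y \<Longrightarrow> a (snd x) \<in> carrier Y \<Longrightarrow> lt Y a x \<otimes>\<^bsub>Y\<^esub> lt Y a (inv_letter x) = \<one>\<^bsub>Y\<^esub>"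
  by (cases x) (auto simp: lt_def group.r_inv group.l_inv)

lemma we_cr:
  assumes "group Y" "\<forall>l \<in> set (x # w). a (snd l) \<in> carrier Y"
  shows "word_eval Y a (cr x w) = lt Y a x \<otimes>\<^bsub>Y\<^esub> word_eval Y a w"
proof (cases w)
  case Nil then show ?thesis by (simp add: cr_def we_Cons)
next
  case (Cons y ys)
  show ?thesis
  proof (cases "y = inv_letter x")
    case True
    have "lt Y a x \<otimes>\<^bsub>Y\<^esub> word_eval Y a w = (lt Y a x \<otimes>\<^bsub>Y\<^esub> lt Y a y) \<otimes>\<^bsub>Y\<^esub> word_eval Y a ys"
      using assms Cons by (simp add: we_Cons monoid.m_assoc group.is_monoid lt_closed we_closed)
    also have "\<dots> = word_eval Y a ys"
      using assms Cons True by (simp add: lt_inv group.is_monoid monoid.l_one we_closed)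
    finally show ?thesis using True Cons by (simp add: cr_def)
  next
    case False
    then show ?thesis using Cons by (simp add: cr_def we_Cons)
  qed
qed

lemma we_fw:
  assumes "group Y" "\<forall>l \<in> set w. a (snd l) \<in> carrier Y"
  shows "word_eval Y a (fw_reduce w) = word_eval Y a w"
  using assms
proof (induction w)
  case Nil then show ?case by simp
next
  case (Cons x w)
  have "\<forall>l \<in> set (x # fw_reduce w). a (snd l) \<in> carrier Y"
    using Cons.prems set_fw[of w] by auto
  then show ?case using Cons by (simp add: fw_cons we_cr we_Cons)
qed

lemma we_hom:
  assumes "group Y" "\<forall>i<k. a i \<in> carrier Y"
  shows "word_eval Y a \<in> hom (free_group k) Y"
proof (rule homI)
  fix x assume "x \<in> carrier (free_group k)"
  then show "word_eval Y a x \<in> carrier Y"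
    using assms by (auto simp: carrier_free_group intro!: we_closed)
next
  fix x y assume "x \<in> carrier (free_group k)" "y \<in> carrier (free_group k)"
  then have "\<forall>l \<in> set (x @ y). a (snd l) \<in> carrier Y"
    using assms by (auto simp: carrier_free_group)
  then show "word_eval Y a (x \<otimes>\<^bsub>free_group k\<^esub> y) = word_eval Y a x \<otimes>\<^bsub>Y\<^esub> word_eval Y a y"
    using assms by (simp add: we_fw we_append)
qed

lemma gen_in: "i < k \<Longrightarrow> [(b, i)] \<in> carrier (free_group k)"
  by (simp add: carrier_free_group fw_cons cr_def)

lemma inv_gen: "i < k \<Longrightarrow> inv\<^bsub>free_group k\<^esub> [(False, i)] = [(True, i)]"
  by (rule group.inv_equality[OF group_free_group])
     (auto simp: gen_in fw_cons cr_def)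

lemma hom_we:
  assumes Y: "group Y" and h: "h \<in> hom (free_group k) Y"
  shows "v \<in> carrier (free_group k) \<Longrightarrow> word_eval Y (\<lambda>i. h [(False, i)]) v = h v"
proof (induction v)
  case Nil
  then show ?case using h group_free_group Y
    by (metis group_hom.hom_one group_hom_axioms_def group_hom_def one_free_group we_Nil)
next
  case (Cons x v)
  obtain b i where x: "x = (b, i)" by (cases x)
  have r: "red (x # v)" using Cons.prems by (simp add: carrier_free_group fw_eq_iff)
  have v: "v \<in> carrier (free_group k)" using Cons.prems red_tl[OF r]
    by (auto simp: carrier_free_group fw_eq_iff)
  have ik: "i < k" using Cons.prems x by (auto simp: carrier_free_group)
  have xv: "x # v = [x] \<otimes>\<^bsub>free_group k\<^esub> v"
    using Cons.prems by (simp add: fw_append fw_cons carrier_free_group)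
  have hx: "h [x] = lt Y (\<lambda>i. h [(False, i)]) x"
  proof (cases b)
    case True
    interpret gh: group_hom "free_group k" Y h
      using h Y group_free_group by (simp add: group_hom_def group_hom_axioms_def)
    have "h [(True, i)] = h (inv\<^bsub>free_group k\<^esub> [(False, i)])" using inv_gen[OF ik] by simp
    also have "\<dots> = inv\<^bsub>Y\<^esub> h [(False, i)]" using gen_in[OF ik] by simp
    finally show ?thesis using x True by (simp add: lt_def)
  qed (simp add: x lt_def)
  have "h (x # v) = h [x] \<otimes>\<^bsub>Y\<^esub> h v"
    using xv x hom_mult[OF h gen_in[OF ik] v] by metis
  then show ?case using hx Cons.IH[OF v] by (simp add: we_Cons)
qed

lemma hom_we_comm:
  assumes "group Y" "group Z" "h \<in> hom Y Z" "\<forall>l \<in> set w. a (snd l) \<in> carrier Y"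
  shows "h (word_eval Y a w) = word_eval Z (h \<circ> a) w"
  using assms(4)
proof (induction w)
  case Nil then show ?case using assms
    by (simp add: group_hom.hom_one group_hom_axioms_def group_hom_def)
next
  case (Cons x w)
  interpret gh: group_hom Y Z h
    using assms by (simp add: group_hom_def group_hom_axioms_def)
  have "h (lt Y a x) = lt Z (h \<circ> a) x"
    using Cons.prems by (simp add: lt_def)
  then show ?case using Cons assms
    by (simp add: we_Cons lt_closed we_closed hom_mult o_def)
qed



lemma nc_normal:
  assumes "group F" "R \<subseteq> carrier F"
  shows "normal_closure F R \<lhd> F"
proof -
  interpret group F by fact
  let ?A = "{N. N \<lhd> F \<and> R \<subseteq> N}"
  have ne: "carrier F \<in> ?A" using normal_self assms by auto
  have "subgroup (\<Inter>?A) F"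
    by (rule subgroup_Inter) (use ne normal_imp_subgroup in auto)
  moreover have "\<forall>x\<in>carrier F. \<forall>h\<in>\<Inter>?A. x \<otimes>\<^bsub>F\<^esub> h \<otimes>\<^bsub>F\<^esub> inv\<^bsub>F\<^esub> x \<in> \<Inter>?A"
  proof (intro ballI InterI)
    fix x h N assume x: "x \<in> carrier F" and h: "h \<in> \<Inter>?A" and N: "N \<in> ?A"
    then have "N \<lhd> F" "h \<in> N" by auto
    then show "x \<otimes>\<^bsub>F\<^esub> h \<otimes>\<^bsub>F\<^esub> inv\<^bsub>F\<^esub> x \<in> N"
      using x normal_inv_iff by blast
  qed
  ultimately have "\<Inter>?A \<lhd> F" using normal_inv_iff[of "\<Inter>?A"] by blast
  then show ?thesis unfolding normal_closure_def .
qed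

lemma nc_sub: "N \<lhd> F \<Longrightarrow> R \<subseteq> N \<Longrightarrow> normal_closure F R \<subseteq> N"
  by (auto simp: normal_closure_def)

lemma nc_sup: "R \<subseteq> normal_closure F R"
  by (auto simp: normal_closure_def)

lemma factor_hom:
  assumes A: "group A" and B: "group B" and C: "group C" and phi: "\<phi> \<in> hom A B"
    and surj: "\<phi> ` carrier A = carrier B" and psi: "\<psi> \<in> hom A C"
    and ker: "kernel A B \<phi> \<subseteq> kernel A C \<psi>"
  shows "\<exists>\<theta> \<in> hom B C. \<forall>x \<in> carrier A. \<theta> (\<phi> x) = \<psi> x"
proof -
  interpret gA: group A by fact
  interpret gB: group B by fact
  interpret gC: group C by fact
  interpret p: group_hom A B \<phi> using phi by (simp add: group_hom_def group_hom_axioms_def A B)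
  interpret q: group_hom A C \<psi> using psi by (simp add: group_hom_def group_hom_axioms_def A C)
  have key: "\<psi> x = \<psi> y" if xy: "x \<in> carrier A" "y \<in> carrier A" "\<phi> x = \<phi> y" for x y
  proof -
    have "\<phi> (x \<otimes>\<^bsub>A\<^esub> inv\<^bsub>A\<^esub> y) = \<phi> x \<otimes>\<^bsub>B\<^esub> \<phi> (inv\<^bsub>A\<^esub> y)"
      by (rule p.hom_mult) (use xy in auto)
    also have "\<dots> = \<phi> y \<otimes>\<^bsub>B\<^esub> inv\<^bsub>B\<^esub> (\<phi> y)" using xy by simp
    also have "\<dots> = \<one>\<^bsub>B\<^esub>" by (rule gB.r_inv) (use xy in auto)
    finally have "\<phi> (x \<otimes>\<^bsub>A\<^esub> inv\<^bsub>A\<^esub> y) = \<one>\<^bsub>B\<^esub>" .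
    then have "x \<otimes>\<^bsub>A\<^esub> inv\<^bsub>A\<^esub> y \<in> kernel A B \<phi>" using xy by (simp add: kernel_def)
    then have "\<psi> (x \<otimes>\<^bsub>A\<^esub> inv\<^bsub>A\<^esub> y) = \<one>\<^bsub>C\<^esub>" using ker by (auto simp: kernel_def)
    then have e: "\<psi> x \<otimes>\<^bsub>C\<^esub> inv\<^bsub>C\<^esub> \<psi> y = \<one>\<^bsub>C\<^esub>" using xy by simp
    have "\<psi> x = \<psi> x \<otimes>\<^bsub>C\<^esub> inv\<^bsub>C\<^esub> \<psi> y \<otimes>\<^bsub>C\<^esub> \<psi> y"
      using xy by (simp add: gC.m_assoc)
    also have "\<dots> = \<one>\<^bsub>C\<^esub> \<otimes>\<^bsub>C\<^esub> \<psi> y" by (simp only: e)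
    also have "\<dots> = \<psi> y" using xy by simp
    finally show ?thesis .
  qed
  define \<theta> where "\<theta> y = \<psi> (SOME x. x \<in> carrier A \<and> \<phi> x = y)" for y
  have sel: "(SOME x. x \<in> carrier A \<and> \<phi> x = y) \<in> carrier A \<and> \<phi> (SOME x. x \<in> carrier A \<and> \<phi> x = y) = y"
    if "y \<in> carrier B" for y
  proof -
    have "y \<in> \<phi> ` carrier A" using that surj by (simp only:)
    then obtain x where x: "x \<in> carrier A" "y = \<phi> x" by (rule imageE)
    then have P: "x \<in> carrier A \<and> \<phi> x = y" by (simp only: simp_thms)
    show ?thesis using someI[of "\<lambda>x. x \<in> carrier A \<and> \<phi> x = y", OF P] .
  qed
  have th: "\<theta> (\<phi> x) = \<psi> x" if "x \<in> carrier A" for x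
  proof -
    let ?s = "SOME x'. x' \<in> carrier A \<and> \<phi> x' = \<phi> x"
    have s: "?s \<in> carrier A" "\<phi> ?s = \<phi> x" using sel[OF p.hom_closed[OF that]] by blast+
    show ?thesis unfolding \<theta>_def using key[OF s(1) that s(2)] .
  qed
  have "\<theta> \<in> hom B C"
  proof (rule homI)
    fix y assume "y \<in> carrier B"
    then show "\<theta> y \<in> carrier C" unfolding \<theta>_def using sel q.hom_closed by blast
  next
    fix y1 y2 assume y: "y1 \<in> carrier B" "y2 \<in> carrier B"
    have "y1 \<in> \<phi> ` carrier A" "y2 \<in> \<phi> ` carrier A" using y surj by (simp_all only:)
    then obtain x1 x2 where x: "x1 \<in> carrier A" "x2 \<in> carrier A" "y1 = \<phi> x1" "y2 = \<phi> x2"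
      by (metis imageE)
    show "\<theta> (y1 \<otimes>\<^bsub>B\<^esub> y2) = \<theta> y1 \<otimes>\<^bsub>C\<^esub> \<theta> y2"
    proof -
      have "y1 \<otimes>\<^bsub>B\<^esub> y2 = \<phi> (x1 \<otimes>\<^bsub>A\<^esub> x2)" using x(1,2) by (simp add: x(3,4))
      then have "\<theta> (y1 \<otimes>\<^bsub>B\<^esub> y2) = \<psi> (x1 \<otimes>\<^bsub>A\<^esub> x2)"
        using th[OF gA.m_closed[OF x(1,2)]] by (simp only:)
      also have "\<dots> = \<psi> x1 \<otimes>\<^bsub>C\<^esub> \<psi> x2" using x(1,2) by (rule q.hom_mult)
      also have "\<dots> = \<theta> y1 \<otimes>\<^bsub>C\<^esub> \<theta> y2" by (simp only: x(3,4) th[OF x(1)] th[OF x(2)])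
      finally show ?thesis .
    qed
  qed
  then show ?thesis
  proof (rule bexI[rotated])
    show "\<forall>x\<in>carrier A. \<theta> (\<phi> x) = \<psi> x" using th by simp
  qed
qed

lemma sum_embed:
  assumes grp: "\<And>i. group (K i)"
  shows "(\<lambda>x i. if i = n then x else \<one>\<^bsub>K i\<^esub>) \<in> hom (K n) (sum_group UNIV K)
       \<and> inj_on (\<lambda>x i. if i = n then x else \<one>\<^bsub>K i\<^esub>) (carrier (K n))"
proof
  have fin: "finite {i. (if i = n then x else \<one>\<^bsub>K i\<^esub>) \<noteq> \<one>\<^bsub>K i\<^esub>}" for x
    by (rule finite_subset[of _ "{n}"]) auto
  show "(\<lambda>x i. if i = n then x else \<one>\<^bsub>K i\<^esub>) \<in> hom (K n) (sum_group UNIV K)"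
  proof (rule homI)
    fix x assume "x \<in> carrier (K n)"
    then show "(\<lambda>i. if i = n then x else \<one>\<^bsub>K i\<^esub>) \<in> carrier (sum_group UNIV K)"
      using grp fin by (auto simp: carrier_sum_group group.is_monoid monoid.one_closed)
  next
    fix x y assume "x \<in> carrier (K n)" "y \<in> carrier (K n)"
    then show "(\<lambda>i. if i = n then x \<otimes>\<^bsub>K n\<^esub> y else \<one>\<^bsub>K i\<^esub>) =
       (\<lambda>i. if i = n then x else \<one>\<^bsub>K i\<^esub>) \<otimes>\<^bsub>sum_group UNIV K\<^esub> (\<lambda>i. if i = n then y else \<one>\<^bsub>K i\<^esub>)"
      using grp by (auto simp: group.is_monoid monoid.l_one monoid.one_closed)
  qed
  show "inj_on (\<lambda>x i. if i = n then x else \<one>\<^bsub>K i\<^esub>) (carrier (K n))"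
  proof (rule inj_onI)
    fix x y assume "(\<lambda>i. if i = n then x else \<one>\<^bsub>K i\<^esub>) = (\<lambda>i. if i = n then y else \<one>\<^bsub>K i\<^esub>)"
    then show "x = y" by (drule_tac x=n in fun_cong) simp
  qed
qed

lemma qi_nc:
  assumes G: "group G"
    and emb: "\<exists>\<psi>. \<psi> \<in> hom (presented_group k (set ws)) G \<and> inj_on \<psi> (carrier (presented_group k (set ws)))"
    and ws: "set ws \<subseteq> carrier (free_group k)" and w: "w \<in> carrier (free_group k)"
    and qi: "satisfies_qi G k ws w"
  shows "w \<in> normal_closure (free_group k) (set ws)"
proof -
  let ?F = "free_group k"
  let ?N = "normal_closure ?F (set ws)"
  let ?P = "presented_group k (set ws)"
  have F: "group ?F" by (rule group_free_group)
  have nN: "?N \<lhd> ?F" using nc_normal[OF F ws] .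
  have P: "group ?P" unfolding presented_group_def using normal.factorgroup_is_group[OF nN] .
  obtain \<psi> where psi: "\<psi> \<in> hom ?P G" and inj: "inj_on \<psi> (carrier ?P)" using emb by blast
  have pi: "(\<lambda>a. ?N #>\<^bsub>?F\<^esub> a) \<in> hom ?F ?P"
    using normal.r_coset_hom_Mod[OF nN] by (simp add: presented_group_def)
  define h where "h = \<psi> \<circ> (\<lambda>a. ?N #>\<^bsub>?F\<^esub> a)"
  have h: "h \<in> hom ?F G" unfolding h_def by (rule hom_compose[OF pi psi])
  define b where "b i = h [(False, i)]" for i
  have b: "\<forall>i<k. b i \<in> carrier G" unfolding b_def using h gen_in by (auto intro: hom_in_carrier)
  have weh: "word_eval G b v = h v" if "v \<in> carrier ?F" for v
    unfolding b_def using hom_we[OF G h that] .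
  have psi1: "\<psi> \<one>\<^bsub>?P\<^esub> = \<one>\<^bsub>G\<^esub>"
    using psi P G by (simp add: group_hom.hom_one group_hom_axioms_def group_hom_def)
  have subN: "subgroup ?N ?F" using nN normal_imp_subgroup by blast
  have "\<forall>v\<in>set ws. word_eval G b v = \<one>\<^bsub>G\<^esub>"
  proof
    fix v assume v: "v \<in> set ws"
    have "v \<in> ?N" using subsetD[OF nc_sup[of "set ws" ?F] v] .
    then have "?N #>\<^bsub>?F\<^esub> v = ?N" by (rule subgroup.rcos_const[OF subN F])
    note Nv = this
    have vF: "v \<in> carrier ?F" using v ws by blast
    have "word_eval G b v = \<psi> (?N #>\<^bsub>?F\<^esub> v)" using weh[OF vF] by (simp add: h_def)
    also have "\<dots> = \<psi> \<one>\<^bsub>?P\<^esub>" using Nv by (simp add: presented_group_def)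
    also have "\<dots> = \<one>\<^bsub>G\<^esub>" by (rule psi1)
    finally show "word_eval G b v = \<one>\<^bsub>G\<^esub>" .
  qed
  then have "word_eval G b w = \<one>\<^bsub>G\<^esub>" using qi b by (simp add: satisfies_qi_def)
  then have "\<psi> (?N #>\<^bsub>?F\<^esub> w) = \<psi> \<one>\<^bsub>?P\<^esub>" using weh[OF w] psi1 by (simp add: h_def)
  moreover have "?N #>\<^bsub>?F\<^esub> w \<in> carrier ?P" using pi w by (rule hom_in_carrier)
  moreover have "\<one>\<^bsub>?P\<^esub> \<in> carrier ?P" using P by (simp add: group.is_monoid monoid.one_closed)
  ultimately have "?N #>\<^bsub>?F\<^esub> w = \<one>\<^bsub>?P\<^esub>" using inj by (meson inj_onD)
  then have "?N #>\<^bsub>?F\<^esub> w = ?N" by (simp add: presented_group_def)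
  moreover have "w \<in> ?N #>\<^bsub>?F\<^esub> w" using group.rcos_self[OF F w subN] .
  ultimately show ?thesis by simp
qed

lemma nc_we:
  assumes "w \<in> normal_closure (free_group k) R" "group Y" "\<forall>i<k. a i \<in> carrier Y"
    "\<forall>v\<in>R. word_eval Y a v = \<one>\<^bsub>Y\<^esub>" "R \<subseteq> carrier (free_group k)"
  shows "word_eval Y a w = \<one>\<^bsub>Y\<^esub>"
proof -
  have gh: "group_hom (free_group k) Y (word_eval Y a)"
    unfolding group_hom_def group_hom_axioms_def
    using we_hom[OF assms(2,3)] assms(2) group_free_group by blast
  have "R \<subseteq> kernel (free_group k) Y (word_eval Y a)"
    using assms(4,5) by (auto simp: kernel_def)
  then have "normal_closure (free_group k) R \<subseteq> kernel (free_group k) Y (word_eval Y a)"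
    by (rule nc_sub[OF group_hom.normal_kernel[OF gh]])
  then show ?thesis using assms(1) by (auto simp: kernel_def)
qed



theorem theorem2:
  fixes K :: "nat \<Rightarrow> 'a monoid" and L :: "'b monoid"
    and G :: "(nat \<Rightarrow> 'a) monoid" and H :: "('b \<times> (nat \<Rightarrow> 'a)) monoid"
  assumes K_fp: "\<And>n. finitely_presented (K n)"
    and K_all: "\<And>Q :: fword set monoid. finitely_presented Q \<Longrightarrow> \<exists>n. is_iso Q (K n)"
    and K_distinct: "\<And>m n. is_iso (K m) (K n) \<Longrightarrow> m = n"
    and G_def: "G = sum_group UNIV K"
    and L_simple: "simple L"
    and L_2gen: "two_generated L"
    and L_triv: "\<And>\<phi>. \<phi> \<in> hom L G \<Longrightarrow> \<forall>x \<in> carrier L. \<phi> x = \<one>\<^bsub>G\<^esub>"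
    and H_def: "H = L \<times>\<times> G"
  shows "radical G L = carrier L \<and> radical H L = {\<one>\<^bsub>L\<^esub>}
         \<and> \<not> geom_equiv G H \<and> same_quasiidentities G H"
proof -
  have grpL: "group L" using L_simple by (simp add: simple_def)
  have grpK: "\<And>n. group (K n)" using K_fp by (simp add: finitely_presented_def)
  have grpG: "group G" unfolding G_def by (rule sum_group) (rule grpK)
  have grpH: "group H" unfolding H_def by (rule DirProd_group[OF grpL grpG])
  have oneG: "\<one>\<^bsub>G\<^esub> \<in> carrier G" by (simp add: grpG group.is_monoid monoid.one_closed)
  have oneL: "\<one>\<^bsub>L\<^esub> \<in> carrier L" by (simp add: grpL group.is_monoid monoid.one_closed)
  have oneGG: "\<one>\<^bsub>G\<^esub> \<otimes>\<^bsub>G\<^esub> \<one>\<^bsub>G\<^esub> = \<one>\<^bsub>G\<^esub>" by (simp add: grpG group.is_monoid monoid.l_one oneG)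
  have oneLL: "\<one>\<^bsub>L\<^esub> \<otimes>\<^bsub>L\<^esub> \<one>\<^bsub>L\<^esub> = \<one>\<^bsub>L\<^esub>" by (simp add: grpL group.is_monoid monoid.l_one oneL)

  have P1: "radical G L = carrier L"
  proof
    have t: "(\<lambda>x. \<one>\<^bsub>G\<^esub>) \<in> hom L G" by (rule homI) (simp_all add: oneG oneGG)
    have "kernel L G (\<lambda>x. \<one>\<^bsub>G\<^esub>) = carrier L" by (simp add: kernel_def)
    then show "radical G L \<subseteq> carrier L" using t unfolding radical_def by blast
    show "carrier L \<subseteq> radical G L" unfolding radical_def kernel_def using L_triv by blast
  qed

  have P2: "radical H L = {\<one>\<^bsub>L\<^esub>}"
  proof
    have i: "(\<lambda>x. (x, \<one>\<^bsub>G\<^esub>)) \<in> hom L H" unfolding H_def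
      by (rule homI) (simp_all add: oneG oneGG grpL group.is_monoid monoid.m_closed)
    have "kernel L H (\<lambda>x. (x, \<one>\<^bsub>G\<^esub>)) = {\<one>\<^bsub>L\<^esub>}" unfolding H_def kernel_def
      using oneL by auto
    then show "radical H L \<subseteq> {\<one>\<^bsub>L\<^esub>}" using i unfolding radical_def by blast
    show "{\<one>\<^bsub>L\<^esub>} \<subseteq> radical H L" unfolding radical_def kernel_def
    proof (intro subsetI InterI)
      fix x S assume x: "x \<in> {\<one>\<^bsub>L\<^esub>}" and S: "S \<in> {{x \<in> carrier L. \<phi> x = \<one>\<^bsub>H\<^esub>} |\<phi>. \<phi> \<in> hom L H}"
      then obtain \<phi> where phi: "\<phi> \<in> hom L H" and S': "S = {x \<in> carrier L. \<phi> x = \<one>\<^bsub>H\<^esub>}" by blast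
      have "group_hom L H \<phi>" using phi grpL grpH by (simp add: group_hom_def group_hom_axioms_def)
      then have "\<phi> \<one>\<^bsub>L\<^esub> = \<one>\<^bsub>H\<^esub>" by (rule group_hom.hom_one)
      then show "x \<in> S" using x S' oneL by simp
    qed
  qed

  obtain a b where ab: "a \<in> carrier L" "b \<in> carrier L" "generate L {a, b} = carrier L"
    using L_2gen unfolding two_generated_def by blast
  define aL where "aL i = (if i = 0 then a else b)" for i :: nat
  let ?F = "free_group 2"
  define \<phi> where "\<phi> = word_eval L aL"
  have aLc: "\<forall>i<2. aL i \<in> carrier L" using ab by (simp add: aL_def)
  have phi: "\<phi> \<in> hom ?F L" unfolding \<phi>_def by (rule we_hom[OF grpL aLc])
  have ghphi: "group_hom ?F L \<phi>" using phi grpL group_free_group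
    by (simp add: group_hom_def group_hom_axioms_def)
  have surj: "\<phi> ` carrier ?F = carrier L"
  proof
    show "\<phi> ` carrier ?F \<subseteq> carrier L" using hom_in_carrier[OF phi] by blast
    have sub: "subgroup (\<phi> ` carrier ?F) L" by (rule group_hom.img_is_subgroup[OF ghphi])
    have pa: "\<phi> [(False, 0)] = a"
      using ab by (simp add: \<phi>_def aL_def we_Cons lt_def grpL group.is_monoid monoid.r_one)
    have pb: "\<phi> [(False, 1)] = b"
      using ab by (simp add: \<phi>_def aL_def we_Cons lt_def grpL group.is_monoid monoid.r_one)
    have "a \<in> \<phi> ` carrier ?F" using pa gen_in[of 0 2 False] by (metis image_eqI zero_less_numeral)
    moreover have "b \<in> \<phi> ` carrier ?F" using pb gen_in[of 1 2 False] by (metis image_eqI one_less_numeral_iff semiring_norm(76))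
    ultimately have "{a, b} \<subseteq> \<phi> ` carrier ?F" by blast
    then have "generate L {a, b} \<subseteq> \<phi> ` carrier ?F" by (rule group.generate_subgroup_incl[OF grpL _ sub])
    then show "carrier L \<subseteq> \<phi> ` carrier ?F" using ab(3) by simp
  qed
  define U where "U = kernel ?F L \<phi>"
  have nU: "U \<lhd> ?F" unfolding U_def by (rule group_hom.normal_kernel[OF ghphi])
  obtain y where y: "y \<in> carrier L" "y \<noteq> \<one>\<^bsub>L\<^esub>"
    using L_simple oneL unfolding simple_def by blast
  have "y \<in> \<phi> ` carrier ?F" using y(1) surj by (simp only:)
  then obtain w where w: "w \<in> carrier ?F" "\<phi> w = y" by (metis imageE)
  have wU: "w \<notin> U" using y w by (simp add: U_def kernel_def)
  have Hcl: "gclosure H ?F U \<subseteq> U"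
  proof -
    let ?psi = "\<lambda>v. (\<phi> v, \<one>\<^bsub>G\<^esub>)"
    have psi: "?psi \<in> hom ?F H" unfolding H_def
      using phi by (auto simp: hom_def oneG oneGG)
    have "kernel ?F H ?psi = U" unfolding U_def H_def kernel_def by simp
    then show ?thesis unfolding gclosure_def using psi by blast
  qed
  have Gcl: "w \<in> gclosure G ?F U"
    unfolding gclosure_def
  proof (rule InterI)
    fix S assume "S \<in> {kernel ?F G \<psi> |\<psi>. \<psi> \<in> hom ?F G \<and> U \<subseteq> kernel ?F G \<psi>}"
    then obtain \<psi> where psi: "\<psi> \<in> hom ?F G" and ker: "U \<subseteq> kernel ?F G \<psi>" and S: "S = kernel ?F G \<psi>"
      by blast
    obtain \<theta> where th: "\<theta> \<in> hom L G" and thx: "\<forall>x \<in> carrier ?F. \<theta> (\<phi> x) = \<psi> x"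
      using factor_hom[OF group_free_group grpL grpG phi surj psi ker[unfolded U_def]] by blast
    have "\<theta> (\<phi> w) = \<one>\<^bsub>G\<^esub>" using L_triv[OF th] hom_in_carrier[OF phi w(1)] by blast
    then have "\<psi> w = \<one>\<^bsub>G\<^esub>" using thx w(1) by simp
    then show "w \<in> S" using S w(1) by (simp add: kernel_def)
  qed
  have P3: "\<not> geom_equiv G H"
  proof
    assume "geom_equiv G H"
    then have "gclosure G ?F U = gclosure H ?F U" using nU unfolding geom_equiv_def by blast
    then show False using Hcl Gcl wU by blast
  qed

  have emb: "\<exists>\<psi>. \<psi> \<in> hom (presented_group k R) G \<and> inj_on \<psi> (carrier (presented_group k R))"
    if R: "finite R" "R \<subseteq> carrier (free_group k)" for k R
  proof -
    let ?P = "presented_group k R"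
    have nN: "normal_closure (free_group k) R \<lhd> free_group k"
      by (rule nc_normal[OF group_free_group R(2)])
    have P: "group ?P" unfolding presented_group_def using normal.factorgroup_is_group[OF nN] .
    have fp: "finitely_presented ?P" unfolding finitely_presented_def
      using P R iso_refl by blast
    obtain n where "is_iso ?P (K n)" using K_all[OF fp] by blast
    then obtain f where f: "f \<in> iso ?P (K n)" unfolding is_iso_def by blast
    define e where "e = (\<lambda>x i. if i = n then x else \<one>\<^bsub>K i\<^esub>)"
    have e: "e \<in> hom (K n) G" "inj_on e (carrier (K n))"
      using sum_embed[where K=K and n=n, OF grpK] unfolding G_def e_def by auto
    have fh: "f \<in> hom ?P (K n)" and fb: "bij_betw f (carrier ?P) (carrier (K n))"
      using f unfolding iso_def by auto
    have "e \<circ> f \<in> hom ?P G" by (rule hom_compose[OF fh e(1)])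
    moreover have "inj_on (e \<circ> f) (carrier ?P)"
      using fb e(2) unfolding bij_betw_def by (metis comp_inj_on)
    ultimately show ?thesis by blast
  qed
  have fstH: "fst \<in> hom H L" unfolding H_def by (auto simp: hom_def mult_DirProd')
  have sndH: "snd \<in> hom H G" unfolding H_def by (auto simp: hom_def mult_DirProd')
  have jH: "(\<lambda>y. (\<one>\<^bsub>L\<^esub>, y)) \<in> hom G H" unfolding H_def
    by (auto simp: hom_def oneL oneLL)
  have P4: "same_quasiidentities G H"
    unfolding same_quasiidentities_def
  proof (intro allI impI)
    fix k ws w assume ws: "set ws \<subseteq> carrier (free_group k)" and w: "w \<in> carrier (free_group k)"
    have lets: "\<forall>l\<in>set v. snd l < k" if "v \<in> carrier (free_group k)" for v
      using that by (simp add: carrier_free_group)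
    show "satisfies_qi G k ws w \<longleftrightarrow> satisfies_qi H k ws w"
    proof
      assume qG: "satisfies_qi G k ws w"
      have wN: "w \<in> normal_closure (free_group k) (set ws)"
        by (rule qi_nc[OF grpG emb[OF finite_set ws] ws w qG])
      show "satisfies_qi H k ws w" unfolding satisfies_qi_def
      proof (intro allI impI)
        fix a assume ac: "\<forall>i<k. a i \<in> carrier H" and wsH: "\<forall>v\<in>set ws. word_eval H a v = \<one>\<^bsub>H\<^esub>"
        have acv: "\<forall>l\<in>set v. a (snd l) \<in> carrier H" if "v \<in> carrier (free_group k)" for v
          using lets[OF that] ac by blast
        have commL: "word_eval L (fst \<circ> a) v = fst (word_eval H a v)" if "v \<in> carrier (free_group k)" for v
          using hom_we_comm[OF grpH grpL fstH acv[OF that]] by simp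
        have commG: "word_eval G (snd \<circ> a) v = snd (word_eval H a v)" if "v \<in> carrier (free_group k)" for v
          using hom_we_comm[OF grpH grpG sndH acv[OF that]] by simp
        have acL: "\<forall>i<k. (fst \<circ> a) i \<in> carrier L" using ac unfolding H_def by (auto simp: mem_Times_iff)
        have acG: "\<forall>i<k. (snd \<circ> a) i \<in> carrier G" using ac unfolding H_def by (auto simp: mem_Times_iff)
        have "\<forall>v\<in>set ws. word_eval L (fst \<circ> a) v = \<one>\<^bsub>L\<^esub>"
        proof
          fix v assume v: "v \<in> set ws"
          then have "v \<in> carrier (free_group k)" using ws by blast
          then show "word_eval L (fst \<circ> a) v = \<one>\<^bsub>L\<^esub>" using commL wsH v unfolding H_def by simp
        qed
        then have eL: "word_eval L (fst \<circ> a) w = \<one>\<^bsub>L\<^esub>" by (rule nc_we[OF wN grpL acL _ ws])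
        have "\<forall>v\<in>set ws. word_eval G (snd \<circ> a) v = \<one>\<^bsub>G\<^esub>"
        proof
          fix v assume v: "v \<in> set ws"
          then have "v \<in> carrier (free_group k)" using ws by blast
          then show "word_eval G (snd \<circ> a) v = \<one>\<^bsub>G\<^esub>" using commG wsH v unfolding H_def by simp
        qed
        then have eG: "word_eval G (snd \<circ> a) w = \<one>\<^bsub>G\<^esub>" using qG acG unfolding satisfies_qi_def by blast
        have "fst (word_eval H a w) = \<one>\<^bsub>L\<^esub>" "snd (word_eval H a w) = \<one>\<^bsub>G\<^esub>"
          using eL eG commL[OF w] commG[OF w] by simp_all
        then show "word_eval H a w = \<one>\<^bsub>H\<^esub>" unfolding H_def by (simp add: prod_eq_iff)
      qed
    next
      assume qH: "satisfies_qi H k ws w"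
      show "satisfies_qi G k ws w" unfolding satisfies_qi_def
      proof (intro allI impI)
        fix a assume ac: "\<forall>i<k. a i \<in> carrier G" and wsG: "\<forall>v\<in>set ws. word_eval G a v = \<one>\<^bsub>G\<^esub>"
        have acv: "\<forall>l\<in>set v. a (snd l) \<in> carrier G" if "v \<in> carrier (free_group k)" for v
          using lets[OF that] ac by blast
        have comm: "word_eval H ((\<lambda>y. (\<one>\<^bsub>L\<^esub>, y)) \<circ> a) v = (\<one>\<^bsub>L\<^esub>, word_eval G a v)"
          if "v \<in> carrier (free_group k)" for v
          using hom_we_comm[OF grpG grpH jH acv[OF that]] by simp
        have acH: "\<forall>i<k. ((\<lambda>y. (\<one>\<^bsub>L\<^esub>, y)) \<circ> a) i \<in> carrier H"
          using ac oneL unfolding H_def by auto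
        have "\<forall>v\<in>set ws. word_eval H ((\<lambda>y. (\<one>\<^bsub>L\<^esub>, y)) \<circ> a) v = \<one>\<^bsub>H\<^esub>"
        proof
          fix v assume v: "v \<in> set ws"
          then have "v \<in> carrier (free_group k)" using ws by blast
          then show "word_eval H ((\<lambda>y. (\<one>\<^bsub>L\<^esub>, y)) \<circ> a) v = \<one>\<^bsub>H\<^esub>"
            using comm wsG v unfolding H_def by simp
        qed
        then have "word_eval H ((\<lambda>y. (\<one>\<^bsub>L\<^esub>, y)) \<circ> a) w = \<one>\<^bsub>H\<^esub>"
          using qH acH unfolding satisfies_qi_def by blast
        then show "word_eval G a w = \<one>\<^bsub>G\<^esub>" using comm[OF w] unfolding H_def by simp
      qed
    qed
  qed
  show ?thesis using P1 P2 P3 P4 by blast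
qed

end
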